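(* Let $n\geq 4$ and $G\in\mathcal{GAQ}_n$. Let $(a,b)$ be an edge of $G$, let $A$ be the set of neighbors of $a$ and $B$ the set of neighbors of $b$. Then $A\setminus\{b\}\neq B\setminus\{a\}$.
   Context: The $n$-dimensional augmented cube $AQ_n$ ($n\geq 1$) has vertex set all binary strings $u_1u_2\cdots u_n$. $AQ_1\cong K_2$ on vertices $0,1$. For $n\geq 2$, $AQ_n$ consists of a copy $AQ^0_{n-1}$ of $AQ_{n-1}$ with $0$ prefixed to every label and a copy $AQ^1_{n-1}$ with $1$ prefixed, plus the following edges: $0u_1\cdots u_{n-1}$ is adjacent to $1v_1\cdots v_{n-1}$ iff either $u_i=v_i$ for all $i$ (cross edge) or $u_i\neq v_i$ for all $i$ (complement edge). $AQ_n$ is $(2n-1)$-regular. Generalized augmented cubes: $\mathcal{GAQ}_4=\{AQ_4\}$; for $n\geq 5$, $\mathcal{GAQ}_n$ consists of all graphs $(V_1\cup V_2, E_1\cup E_2\cup M_1\cup M_2)$ where $(V_1,E_1),(V_2,E_2)$ are (vertex-disjoint copies of, possibly identical) graphs in $\mathcal{GAQ}_{n-1}$ and $M_1,M_2$ are edge-disjoint perfect matchings between $V_1$ and $V_2$. A generalized augmented cube is a graph in $\mathcal{GAQ}_n$ for some $n\geq 4$. *)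

theory Defs
  imports Main
begin

text \<open>Graphs are pairs (V, E) with E a set of 2-element subsets of V.
  Vertices of AQ_n are boolean lists of length n (True = 1, False = 0).\<close>

fun aq_adj :: "nat \<Rightarrow> bool list \<Rightarrow> bool list \<Rightarrow> bool" where
  "aq_adj 0 u v = False"
| "aq_adj (Suc 0) u v = (u \<noteq> v)"
| "aq_adj (Suc (Suc n)) (x # u) (y # v) =
     (if x = y then aq_adj (Suc n) u v else (u = v \<or> v = map Not u))"
| "aq_adj (Suc (Suc n)) _ _ = False"

definition aq_verts :: "nat \<Rightarrow> bool list set" where
  "aq_verts n = {u. length u = n}"

definition aq_edges :: "nat \<Rightarrow> bool list set set" where
  "aq_edges n = {{u, v} | u v. length u = n \<and> length v = n \<and> aq_adj n u v}"

definition graph_iso ::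
  "('a \<Rightarrow> 'b) \<Rightarrow> 'a set \<Rightarrow> 'a set set \<Rightarrow> 'b set \<Rightarrow> 'b set set \<Rightarrow> bool" where
  "graph_iso f V E V' E' \<longleftrightarrow> bij_betw f V V' \<and> E \<subseteq> Pow V \<and> (image f) ` E = E'"

definition perfect_matching_between :: "'a set \<Rightarrow> 'a set \<Rightarrow> 'a set set \<Rightarrow> bool" where
  "perfect_matching_between V1 V2 M \<longleftrightarrow>
     M \<subseteq> {{u, v} | u v. u \<in> V1 \<and> v \<in> V2} \<and>
     (\<forall>x \<in> V1 \<union> V2. \<exists>!e. e \<in> M \<and> x \<in> e)"

inductive gaq :: "nat \<Rightarrow> 'a set \<times> 'a set set \<Rightarrow> bool" where
  base: "graph_iso f V E (aq_verts 4) (aq_edges 4) \<Longrightarrow> gaq 4 (V, E)"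
| step: "\<lbrakk> gaq n (V1, E1); gaq n (V2, E2); V1 \<inter> V2 = {};
          perfect_matching_between V1 V2 M1; perfect_matching_between V1 V2 M2;
          M1 \<inter> M2 = {} \<rbrakk>
         \<Longrightarrow> gaq (Suc n) (V1 \<union> V2, E1 \<union> E2 \<union> M1 \<union> M2)"

end

theory Submission
  imports Defs
begin

definition xl :: "bool list \<Rightarrow> bool list \<Rightarrow> bool list" where
 "xl u v = map2 (\<noteq>) u v"
definition tw :: "bool list \<Rightarrow> bool list" where
 "tw s = (if s = [True,False,False,False] then [False,True,False,False]
    else if s = [True,True,True,True] then [False,True,False,False]
    else if s = [False,True,True,True] then [False,False,True,False]
    else [True,False,False,False])"

lemma chk: "\<forall>a b c d e f g h. aq_adj 4 [a,b,c,d] [e,f,g,h] \<longrightarrow>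
   (let x = xl [a,b,c,d] (tw (xl [a,b,c,d] [e,f,g,h])) in
   x \<noteq> [a,b,c,d] \<and> x \<noteq> [e,f,g,h] \<and> length x = 4 \<and> aq_adj 4 [a,b,c,d] x \<noteq> aq_adj 4 [e,f,g,h] x)"
  unfolding all_bool_eq by (simp add: xl_def tw_def numeral_eq_Suc)

lemma chk2: "\<forall>a b c d. aq_adj 4 [a,b,c,d] [\<not>a,b,c,d] \<and> aq_adj 4 [a,b,c,d] [a,\<not>b,c,d]"
  unfolding all_bool_eq by (simp add: numeral_eq_Suc)

lemma l4: "length u = 4 \<Longrightarrow> \<exists>a b c d. u = [a,b,c,d]"
  by (auto simp: length_Suc_conv numeral_eq_Suc)

lemma adj_sym: "aq_adj n u v = aq_adj n v u"
proof (induction n u v rule: aq_adj.induct)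
  case (3 n x u y v)
  have "(v = map Not u) = (u = map Not v)" by (auto simp: o_def)
  then show ?case using 3 by auto
qed auto

lemma edges4: "{u,w} \<in> aq_edges 4 \<longleftrightarrow> length u = 4 \<and> length w = 4 \<and> aq_adj 4 u w"
  unfolding aq_edges_def
  apply (auto simp: doubleton_eq_iff)
  using adj_sym by blast+

definition N :: "'a set set \<Rightarrow> 'a \<Rightarrow> 'a set" where
  "N E a = {x. {a,x} \<in> E}"

definition ginv :: "'a set \<Rightarrow> 'a set set \<Rightarrow> bool" where
  "ginv V E \<longleftrightarrow> E \<subseteq> Pow V \<and> (\<forall>v\<in>V. \<exists>x y. x \<noteq> y \<and> {v,x} \<in> E \<and> {v,y} \<in> E)
     \<and> (\<forall>a b. {a,b} \<in> E \<longrightarrow> N E a - {b} \<noteq> N E b - {a})"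

lemma ginv_sub: "ginv V E \<Longrightarrow> E \<subseteq> Pow V" unfolding ginv_def by blast
lemma ginv_deg: "ginv V E \<Longrightarrow> v \<in> V \<Longrightarrow> \<exists>x y. x \<noteq> y \<and> {v,x} \<in> E \<and> {v,y} \<in> E"
  unfolding ginv_def by blast
lemma ginv_diff: "ginv V E \<Longrightarrow> {a,b} \<in> E \<Longrightarrow> N E a - {b} \<noteq> N E b - {a}"
  unfolding ginv_def by blast
lemma ginvI: "E \<subseteq> Pow V \<Longrightarrow> (\<And>v. v \<in> V \<Longrightarrow> \<exists>x y. x \<noteq> y \<and> {v,x} \<in> E \<and> {v,y} \<in> E)
  \<Longrightarrow> (\<And>a b. {a,b} \<in> E \<Longrightarrow> N E a - {b} \<noteq> N E b - {a}) \<Longrightarrow> ginv V E"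
  unfolding ginv_def by blast

lemma loopfree: "ginv V E \<Longrightarrow> {a} \<notin> E"
  unfolding ginv_def by (metis insert_absorb2)

lemma base_inv:
  assumes "graph_iso f V E (aq_verts 4) (aq_edges 4)"
  shows "ginv V E"
proof -
  have inj: "inj_on f V" and img: "f ` V = aq_verts 4" and sub: "E \<subseteq> Pow V"
    and eimg: "(image f) ` E = aq_edges 4"
    using assms unfolding graph_iso_def bij_betw_def by auto
  have len: "length (f a) = 4" if "a \<in> V" for a
    using img that unfolding aq_verts_def by auto
  have key: "{a,x} \<in> E \<longleftrightarrow> aq_adj 4 (f a) (f x)" if "a \<in> V" "x \<in> V" for a x
  proof
    assume "{a,x} \<in> E"
    then have "f ` {a,x} \<in> aq_edges 4" using eimg by blast
    then show "aq_adj 4 (f a) (f x)" using edges4 by auto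
  next
    assume "aq_adj 4 (f a) (f x)"
    then have "{f a, f x} \<in> aq_edges 4" using edges4 len that by auto
    then obtain e where e: "e \<in> E" "{f a, f x} = f ` e" using eimg by auto
    have "e \<subseteq> V" using e sub by auto
    have "f ` e = f ` {a,x}" using e by auto
    moreover have "{a,x} \<subseteq> V" using that by auto
    ultimately have "e = {a,x}" using inj_on_image_eq_iff[OF inj \<open>e \<subseteq> V\<close> \<open>{a,x} \<subseteq> V\<close>] by simp
    then show "{a,x} \<in> E" using e by auto
  qed
  have pre: "\<exists>x\<in>V. f x = w" if "length w = 4" for w
  proof -
    have "w \<in> f ` V" using img that unfolding aq_verts_def by auto
    then show ?thesis by auto
  qed
  have inE: "a \<in> V \<and> x \<in> V" if "{a,x} \<in> E" for a x using sub that by auto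
  have P2: "\<forall>v\<in>V. \<exists>x y. x \<noteq> y \<and> {v,x} \<in> E \<and> {v,y} \<in> E"
  proof
    fix v assume v: "v \<in> V"
    obtain a b c d where u: "f v = [a,b,c,d]" using l4 len v by blast
    obtain x where x: "x \<in> V" "f x = [\<not>a,b,c,d]" using pre[of "[\<not>a,b,c,d]"] by auto
    obtain y where y: "y \<in> V" "f y = [a,\<not>b,c,d]" using pre[of "[a,\<not>b,c,d]"] by auto
    have "x \<noteq> y" using x y by auto
    moreover have "{v,x} \<in> E" "{v,y} \<in> E" using key v x y u chk2 by auto
    ultimately show "\<exists>x y. x \<noteq> y \<and> {v,x} \<in> E \<and> {v,y} \<in> E" by blast
  qed
  have P3: "N E a - {b} \<noteq> N E b - {a}" if ab: "{a,b} \<in> E" for a b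
  proof -
    have V: "a \<in> V" "b \<in> V" using inE ab by auto
    obtain a1 a2 a3 a4 where u: "f a = [a1,a2,a3,a4]" using l4 len V by blast
    obtain b1 b2 b3 b4 where w: "f b = [b1,b2,b3,b4]" using l4 len V by blast
    have adj: "aq_adj 4 (f a) (f b)" using key V ab by auto
    define w where "w = xl (f a) (tw (xl (f a) (f b)))"
    have W: "w \<noteq> f a \<and> w \<noteq> f b \<and> length w = 4 \<and> aq_adj 4 (f a) w \<noteq> aq_adj 4 (f b) w"
      using chk adj u w unfolding w_def Let_def by simp
    obtain x where x: "x \<in> V" "f x = w" using pre W by auto
    have "x \<noteq> a" "x \<noteq> b" using x W by auto
    moreover have "({a,x} \<in> E) \<noteq> ({b,x} \<in> E)" using key V x W by auto
    ultimately show ?thesis unfolding N_def by blast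
  qed
  show ?thesis using ginvI[OF sub] P2 P3 by blast
qed

lemma same_side:
  assumes "E1 \<subseteq> Pow V1" "a \<in> V1" "b \<in> V1"
    "\<And>y x. y \<in> V1 \<Longrightarrow> x \<in> V1 \<Longrightarrow> ({y,x} \<in> E \<longleftrightarrow> {y,x} \<in> E1)"
    "N E1 a - {b} \<noteq> N E1 b - {a}"
  shows "N E a - {b} \<noteq> N E b - {a}"
proof
  assume eq: "N E a - {b} = N E b - {a}"
  have "N E1 a - {b} = N E1 b - {a}"
  proof (rule set_eqI)
    fix x
    show "x \<in> N E1 a - {b} \<longleftrightarrow> x \<in> N E1 b - {a}"
    proof (cases "x \<in> V1")
      case True
      then show ?thesis using eq[THEN eqset_imp_iff, of x] assms(2) assms(3) assms(4)[of a x] assms(4)[of b x]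
        unfolding N_def by auto
    next
      case False
      then show ?thesis using assms(1) unfolding N_def by auto
    qed
  qed
  then show False using assms(5) by blast
qed

lemma step_inv:
  assumes i1: "ginv V1 E1" and i2: "ginv V2 E2" and disj: "V1 \<inter> V2 = {}"
    and pm1: "perfect_matching_between V1 V2 M1" and pm2: "perfect_matching_between V1 V2 M2"
  shows "ginv (V1 \<union> V2) (E1 \<union> E2 \<union> M1 \<union> M2)"
proof -
  define E where "E = E1 \<union> E2 \<union> M1 \<union> M2"
  have s1: "E1 \<subseteq> Pow V1" and s2: "E2 \<subseteq> Pow V2" using ginv_sub i1 i2 by auto
  have m1: "M1 \<subseteq> {{u, v} | u v. u \<in> V1 \<and> v \<in> V2}"
    using pm1 unfolding perfect_matching_between_def by (rule conjunct1)
  have m2: "M2 \<subseteq> {{u, v} | u v. u \<in> V1 \<and> v \<in> V2}"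
    using pm2 unfolding perfect_matching_between_def by (rule conjunct1)
  have u1: "\<forall>x \<in> V1 \<union> V2. \<exists>!e. e \<in> M1 \<and> x \<in> e"
    using pm1 unfolding perfect_matching_between_def by (rule conjunct2)
  have u2: "\<forall>x \<in> V1 \<union> V2. \<exists>!e. e \<in> M2 \<and> x \<in> e"
    using pm2 unfolding perfect_matching_between_def by (rule conjunct2)
  have mp: "M \<subseteq> Pow (V1 \<union> V2)" if hM: "M \<subseteq> {{u, v} | u v. u \<in> V1 \<and> v \<in> V2}" for M
  proof
    fix e assume "e \<in> M"
    then obtain p q where "e = {p,q}" "p \<in> V1" "q \<in> V2" using hM by blast
    then show "e \<in> Pow (V1 \<union> V2)" by auto
  qed
  have "Pow V1 \<subseteq> Pow (V1 \<union> V2)" "Pow V2 \<subseteq> Pow (V1 \<union> V2)" by auto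
  then have sub: "E \<subseteq> Pow (V1 \<union> V2)" unfolding E_def using s1 s2 mp[OF m1] mp[OF m2]
    by (intro Un_least) (rule subset_trans; assumption)+
  have loc1: "{y,x} \<in> E \<longleftrightarrow> {y,x} \<in> E1" if "y \<in> V1" "x \<in> V1" for y x
  proof
    assume "{y,x} \<in> E"
    moreover have "{y,x} \<notin> E2"
    proof
      assume "{y,x} \<in> E2"
      then have "y \<in> V2" using s2 by auto
      then show False using that disj by auto
    qed
    moreover have "{y,x} \<notin> M" if hM: "M \<subseteq> {{u, v} | u v. u \<in> V1 \<and> v \<in> V2}" for M
    proof
      assume "{y,x} \<in> M"
      then obtain p q where pq: "{y,x} = {p,q}" "p \<in> V1" "q \<in> V2" using hM by blast
      have "p \<in> {y,x}" "q \<in> {y,x}" using pq by auto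
      then show False using pq \<open>y \<in> V1\<close> \<open>x \<in> V1\<close> disj by auto
    qed
    then have "{y,x} \<notin> M1" "{y,x} \<notin> M2" using m1 m2 by auto
    ultimately show "{y,x} \<in> E1" unfolding E_def by blast
  qed (auto simp: E_def)
  have loc2: "{y,x} \<in> E \<longleftrightarrow> {y,x} \<in> E2" if "y \<in> V2" "x \<in> V2" for y x
  proof
    assume "{y,x} \<in> E"
    moreover have "{y,x} \<notin> E1"
    proof
      assume "{y,x} \<in> E1"
      then have "y \<in> V1" using s1 by auto
      then show False using that disj by auto
    qed
    moreover have "{y,x} \<notin> M" if hM: "M \<subseteq> {{u, v} | u v. u \<in> V1 \<and> v \<in> V2}" for M
    proof
      assume "{y,x} \<in> M"
      then obtain p q where pq: "{y,x} = {p,q}" "p \<in> V1" "q \<in> V2" using hM by blast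
      have "p \<in> {y,x}" "q \<in> {y,x}" using pq by auto
      then show False using pq \<open>y \<in> V2\<close> \<open>x \<in> V2\<close> disj by auto
    qed
    then have "{y,x} \<notin> M1" "{y,x} \<notin> M2" using m1 m2 by auto
    ultimately show "{y,x} \<in> E2" unfolding E_def by blast
  qed (auto simp: E_def)
  have crossM: "{b,z} \<in> M1 \<union> M2" if "b \<in> V2" "z \<in> V1" "{b,z} \<in> E" for b z
  proof -
    have "{b,z} \<notin> E1"
    proof
      assume "{b,z} \<in> E1"
      then have "b \<in> V1" using s1 by auto
      then show False using that disj by auto
    qed
    moreover have "{b,z} \<notin> E2"
    proof
      assume "{b,z} \<in> E2"
      then have "z \<in> V2" using s2 by auto
      then show False using that disj by auto
    qed
    ultimately show ?thesis using that(3) unfolding E_def by blast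
  qed
  have cross: "N E a - {b} \<noteq> N E b - {a}" if ab: "a \<in> V1" "b \<in> V2" "{a,b} \<in> E" for a b
  proof
    assume eq: "N E a - {b} = N E b - {a}"
    obtain x y where xy: "x \<noteq> y" "{a,x} \<in> E1" "{a,y} \<in> E1"
      using ginv_deg[OF i1] ab by blast
    have xyV: "x \<in> V1" "y \<in> V1" using xy s1 by auto
    have "x \<noteq> a" "y \<noteq> a" using xy loopfree[OF i1] by auto
    have "x \<noteq> b" "y \<noteq> b" using xyV ab disj by auto
    have "x \<in> N E a - {b}" "y \<in> N E a - {b}" using xy \<open>x \<noteq> b\<close> \<open>y \<noteq> b\<close>
      unfolding N_def E_def by auto
    then have "{b,x} \<in> E" "{b,y} \<in> E" using eq unfolding N_def by auto
    then have ex: "{b,x} \<in> M1 \<union> M2" "{b,y} \<in> M1 \<union> M2" using crossM ab xyV by auto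
    have "{b,a} \<in> E" using ab(3) by (simp add: insert_commute)
    then have ea: "{b,a} \<in> M1 \<union> M2" using crossM ab by blast
    have d: "{b,x} \<noteq> {b,y}" "{b,x} \<noteq> {b,a}" "{b,y} \<noteq> {b,a}"
      using \<open>x \<noteq> y\<close> \<open>x \<noteq> a\<close> \<open>y \<noteq> a\<close> \<open>x \<noteq> b\<close> \<open>y \<noteq> b\<close>
      by (auto simp: doubleton_eq_iff)
    have bV: "b \<in> V1 \<union> V2" using ab by auto
    have ex1: "\<exists>!e. e \<in> M1 \<and> b \<in> e" using u1 bV by blast
    have ex2: "\<exists>!e. e \<in> M2 \<and> b \<in> e" using u2 bV by blast
    have U1: "e = e'" if "e \<in> M1" "b \<in> e" "e' \<in> M1" "b \<in> e'" for e e'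
      using ex1 that by blast
    have U2: "e = e'" if "e \<in> M2" "b \<in> e" "e' \<in> M2" "b \<in> e'" for e e'
      using ex2 that by blast
    have bin: "b \<in> {b,x}" "b \<in> {b,y}" "b \<in> {b,a}" by auto
    have n1: "\<not> ({b,x} \<in> M1 \<and> {b,y} \<in> M1)" using U1[OF _ bin(1) _ bin(2)] d(1) by blast
    have n2: "\<not> ({b,x} \<in> M1 \<and> {b,a} \<in> M1)" using U1[OF _ bin(1) _ bin(3)] d(2) by blast
    have n3: "\<not> ({b,y} \<in> M1 \<and> {b,a} \<in> M1)" using U1[OF _ bin(2) _ bin(3)] d(3) by blast
    have n4: "\<not> ({b,x} \<in> M2 \<and> {b,y} \<in> M2)" using U2[OF _ bin(1) _ bin(2)] d(1) by blast
    have n5: "\<not> ({b,x} \<in> M2 \<and> {b,a} \<in> M2)" using U2[OF _ bin(1) _ bin(3)] d(2) by blast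
    have n6: "\<not> ({b,y} \<in> M2 \<and> {b,a} \<in> M2)" using U2[OF _ bin(2) _ bin(3)] d(3) by blast
    show False using ex ea n1 n2 n3 n4 n5 n6 by blast
  qed
  have P2: "\<exists>x y. x \<noteq> y \<and> {v,x} \<in> E \<and> {v,y} \<in> E" if "v \<in> V1 \<union> V2" for v
  proof (cases "v \<in> V1")
    case True
    then show ?thesis using ginv_deg[OF i1 True] unfolding E_def by blast
  next
    case False
    then have "v \<in> V2" using that by auto
    then show ?thesis using ginv_deg[OF i2] unfolding E_def by blast
  qed
  have P3: "N E a - {b} \<noteq> N E b - {a}" if ab: "{a,b} \<in> E" for a b
  proof -
    have V: "a \<in> V1 \<union> V2" "b \<in> V1 \<union> V2" using sub ab by auto
    show ?thesis
    proof (cases "a \<in> V1")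
      case aV1: True
      show ?thesis
      proof (cases "b \<in> V1")
        case True
        have "{a,b} \<in> E1" using loc1 aV1 True ab by auto
        then have "N E1 a - {b} \<noteq> N E1 b - {a}" using ginv_diff[OF i1] by blast
        then show ?thesis using same_side[OF s1 aV1 True] loc1 by blast
      next
        case False
        then show ?thesis using cross aV1 V ab by blast
      qed
    next
      case aV2: False
      then have aV2: "a \<in> V2" using V by auto
      show ?thesis
      proof (cases "b \<in> V2")
        case True
        have "{a,b} \<in> E2" using loc2 aV2 True ab by auto
        then have "N E2 a - {b} \<noteq> N E2 b - {a}" using ginv_diff[OF i2] by blast
        then show ?thesis using same_side[OF s2 aV2 True] loc2 by blast
      next
        case False
        then have "b \<in> V1" using V by auto
        then have "N E b - {a} \<noteq> N E a - {b}" using cross aV2 ab by (simp add: insert_commute)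
        then show ?thesis by metis
      qed
    qed
  qed
  have "ginv (V1 \<union> V2) E" using ginvI[OF sub P2 P3] by blast
  then show ?thesis unfolding E_def .
qed

lemma gaq_inv: "gaq n G \<Longrightarrow> ginv (fst G) (snd G)"
proof (induction rule: gaq.induct)
  case (base f V E)
  then show ?case using base_inv by simp
next
  case (step n V1 E1 V2 E2 M1 M2)
  then show ?case using step_inv by simp
qed

theorem lemma3p1:
  fixes V :: "'a set" and E :: "'a set set" and a b :: 'a and n :: nat
  assumes "n \<ge> 4" and "gaq n (V, E)" and "{a, b} \<in> E"
  shows "{x. {a, x} \<in> E} - {b} \<noteq> {x. {b, x} \<in> E} - {a}"
  using ginv_diff[OF gaq_inv[OF assms(2)]] assms(3) unfolding N_def by simp

end
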